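(* Let $\Omega\subseteq\mathbb{F}$ be a P-closed set with finite P-basis $\mathcal{B}$ and $n=\mathrm{Rk}(\Omega)$, and let $\mathcal{C}\subseteq\mathbb{F}^\mathcal{B}$ be a left linear code of dimension $k\ge1$. Then $\mathrm{d}_\mathcal{B}(\mathcal{C})=n-k+1$ (i.e. $\mathcal{C}$ is maximum skew distance) if and only if $\pi_{\mathcal{B},\mathcal{A}}(\mathcal{C})\subseteq\mathbb{F}^\mathcal{A}$ is MDS (has minimum Hamming distance $n-k+1$) for every P-basis $\mathcal{A}$ of $\Omega$.
   Context: $\mathbb{F}$ is a division ring, $\sigma$ a ring endomorphism, $\delta$ a $\sigma$-derivation; $\mathbb{F}[x;\sigma,\delta]$ the skew polynomial ring ($xa=\sigma(a)x+\delta(a)$), evaluation $F(a)$ defined by $F-F(a)\in\mathbb{F}[x;\sigma,\delta](x-a)$. P-closure $\overline\Omega$ is the common zero set of all skew polynomials vanishing on $\Omega$; P-closed, P-independent (no element in the P-closure of the others), P-basis (P-independent subset whose P-closure is $\Omega$); $\mathrm{Rk}(\Omega)$ is the common size of P-bases. $E_\mathcal{B}$ (evaluation on $\mathcal{B}$) is a bijection from skew polynomials of degree $<n$ onto $\mathbb{F}^\mathcal{B}$. Skew weight $\mathrm{wt}_\mathcal{B}(E_\mathcal{B}(F))=n-\mathrm{Rk}(Z(F)\cap\Omega)$; $\mathrm{d}_\mathcal{B}(\mathcal{C})$ is the minimum of $\mathrm{wt}_\mathcal{B}(f-g)$ over distinct $f,g\in\mathcal{C}$. $\pi_{\mathcal{B},\mathcal{A}}(E_\mathcal{B}(F))=E_\mathcal{A}(F)$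 for $\deg F<n$. *)

theory Defs
  imports "HOL-Computational_Algebra.Polynomial"
begin

text \<open>Skew polynomials are represented by their (left) coefficient lists,
  i.e. an element of type 'a poly stands for sum_i (coeff p i) x^i with
  coefficients written on the left. Multiplication follows x a = sigma(a) x + delta(a).\<close>

definition ring_endo :: "('a::division_ring \<Rightarrow> 'a) \<Rightarrow> bool" where
  "ring_endo \<sigma> \<longleftrightarrow> \<sigma> 1 = 1 \<and> (\<forall>a b. \<sigma> (a + b) = \<sigma> a + \<sigma> b)
      \<and> (\<forall>a b. \<sigma> (a * b) = \<sigma> a * \<sigma> b)"

definition sigma_derivation :: "('a::division_ring \<Rightarrow> 'a) \<Rightarrow> ('a \<Rightarrow> 'a) \<Rightarrow> bool" where
  "sigma_derivation \<sigma> \<delta> \<longleftrightarrow> (\<forall>a b. \<delta> (a + b) = \<delta> a + \<delta> b)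
      \<and> (\<forall>a b. \<delta> (a * b) = \<sigma> a * \<delta> b + \<delta> a * b)"

definition xmul :: "('a::division_ring \<Rightarrow> 'a) \<Rightarrow> ('a \<Rightarrow> 'a) \<Rightarrow> 'a poly \<Rightarrow> 'a poly" where
  "xmul \<sigma> \<delta> p = pCons 0 (map_poly \<sigma> p) + map_poly \<delta> p"

definition lsmult :: "'a::division_ring \<Rightarrow> 'a poly \<Rightarrow> 'a poly" where
  "lsmult a p = map_poly (\<lambda>c. a * c) p"

definition skew_mult :: "('a::division_ring \<Rightarrow> 'a) \<Rightarrow> ('a \<Rightarrow> 'a) \<Rightarrow> 'a poly \<Rightarrow> 'a poly \<Rightarrow> 'a poly" where
  "skew_mult \<sigma> \<delta> p q = (\<Sum>i\<le>degree p. lsmult (coeff p i) ((xmul \<sigma> \<delta> ^^ i) q))"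

definition skew_eval :: "('a::division_ring \<Rightarrow> 'a) \<Rightarrow> ('a \<Rightarrow> 'a) \<Rightarrow> 'a poly \<Rightarrow> 'a \<Rightarrow> 'a" where
  "skew_eval \<sigma> \<delta> F a = (THE b. \<exists>Q. F - [:b:] = skew_mult \<sigma> \<delta> Q [:- a, 1:])"

definition zeros :: "('a::division_ring \<Rightarrow> 'a) \<Rightarrow> ('a \<Rightarrow> 'a) \<Rightarrow> 'a poly \<Rightarrow> 'a set" where
  "zeros \<sigma> \<delta> F = {a. skew_eval \<sigma> \<delta> F a = 0}"

definition Pclosure :: "('a::division_ring \<Rightarrow> 'a) \<Rightarrow> ('a \<Rightarrow> 'a) \<Rightarrow> 'a set \<Rightarrow> 'a set" where
  "Pclosure \<sigma> \<delta> \<Omega> = {a. \<forall>F. (\<forall>b\<in>\<Omega>. skew_eval \<sigma> \<delta> F b = 0) \<longrightarrow> skew_eval \<sigma> \<delta> F a = 0}"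

definition P_closed :: "('a::division_ring \<Rightarrow> 'a) \<Rightarrow> ('a \<Rightarrow> 'a) \<Rightarrow> 'a set \<Rightarrow> bool" where
  "P_closed \<sigma> \<delta> \<Omega> \<longleftrightarrow> Pclosure \<sigma> \<delta> \<Omega> = \<Omega>"

definition P_indep :: "('a::division_ring \<Rightarrow> 'a) \<Rightarrow> ('a \<Rightarrow> 'a) \<Rightarrow> 'a set \<Rightarrow> bool" where
  "P_indep \<sigma> \<delta> B \<longleftrightarrow> (\<forall>b\<in>B. b \<notin> Pclosure \<sigma> \<delta> (B - {b}))"

definition P_basis :: "('a::division_ring \<Rightarrow> 'a) \<Rightarrow> ('a \<Rightarrow> 'a) \<Rightarrow> 'a set \<Rightarrow> 'a set \<Rightarrow> bool" where
  "P_basis \<sigma> \<delta> B \<Omega> \<longleftrightarrow> B \<subseteq> \<Omega> \<and> P_indep \<sigma> \<delta> B \<and> Pclosure \<sigma> \<delta> B = \<Omega>"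

definition Rk :: "('a::division_ring \<Rightarrow> 'a) \<Rightarrow> ('a \<Rightarrow> 'a) \<Rightarrow> 'a set \<Rightarrow> nat" where
  "Rk \<sigma> \<delta> \<Omega> = card (SOME B. P_basis \<sigma> \<delta> B \<Omega>)"

text \<open>Vectors in F^B are functions 'a => 'a vanishing outside B.\<close>
definition vecs :: "'a::division_ring set \<Rightarrow> ('a \<Rightarrow> 'a) set" where
  "vecs B = {c. \<forall>x. x \<notin> B \<longrightarrow> c x = 0}"

definition left_code :: "'a::division_ring set \<Rightarrow> ('a \<Rightarrow> 'a) set \<Rightarrow> bool" where
  "left_code B C \<longleftrightarrow> C \<subseteq> vecs B \<and> (\<lambda>_. 0) \<in> C
     \<and> (\<forall>u\<in>C. \<forall>v\<in>C. (\<lambda>i. u i + v i) \<in> C)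
     \<and> (\<forall>a. \<forall>u\<in>C. (\<lambda>i. a * u i) \<in> C)"

definition lcomb :: "(('b \<Rightarrow> 'a) \<Rightarrow> 'a::division_ring) \<Rightarrow> ('b \<Rightarrow> 'a) set \<Rightarrow> 'b \<Rightarrow> 'a" where
  "lcomb c S = (\<lambda>i. \<Sum>v\<in>S. c v * v i)"

definition left_indep :: "('b \<Rightarrow> 'a::division_ring) set \<Rightarrow> bool" where
  "left_indep S \<longleftrightarrow> (\<forall>c. lcomb c S = (\<lambda>_. 0) \<longrightarrow> (\<forall>v\<in>S. c v = 0))"

definition left_span :: "('b \<Rightarrow> 'a::division_ring) set \<Rightarrow> ('b \<Rightarrow> 'a) set" where
  "left_span S = {lcomb c S | c. True}"

definition left_basis :: "('b \<Rightarrow> 'a::division_ring) set \<Rightarrow> ('b \<Rightarrow> 'a) set \<Rightarrow> bool" where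
  "left_basis S C \<longleftrightarrow> finite S \<and> S \<subseteq> C \<and> left_indep S \<and> left_span S = C"

definition left_dim :: "('b \<Rightarrow> 'a::division_ring) set \<Rightarrow> nat" where
  "left_dim C = card (SOME S. left_basis S C)"

definition E :: "('a::division_ring \<Rightarrow> 'a) \<Rightarrow> ('a \<Rightarrow> 'a) \<Rightarrow> 'a set \<Rightarrow> 'a poly \<Rightarrow> 'a \<Rightarrow> 'a" where
  "E \<sigma> \<delta> B F = (\<lambda>b. if b \<in> B then skew_eval \<sigma> \<delta> F b else 0)"

definition interp :: "('a::division_ring \<Rightarrow> 'a) \<Rightarrow> ('a \<Rightarrow> 'a) \<Rightarrow> 'a set \<Rightarrow> ('a \<Rightarrow> 'a) \<Rightarrow> 'a poly" where
  "interp \<sigma> \<delta> B c = (THE F. degree F < Rk \<sigma> \<delta> (Pclosure \<sigma> \<delta> B) \<and> E \<sigma> \<delta> B F = c)"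

definition skew_wt :: "('a::division_ring \<Rightarrow> 'a) \<Rightarrow> ('a \<Rightarrow> 'a) \<Rightarrow> 'a set \<Rightarrow> ('a \<Rightarrow> 'a) \<Rightarrow> nat" where
  "skew_wt \<sigma> \<delta> B c = Rk \<sigma> \<delta> (Pclosure \<sigma> \<delta> B)
      - Rk \<sigma> \<delta> (zeros \<sigma> \<delta> (interp \<sigma> \<delta> B c) \<inter> Pclosure \<sigma> \<delta> B)"

definition skew_dist :: "('a::division_ring \<Rightarrow> 'a) \<Rightarrow> ('a \<Rightarrow> 'a) \<Rightarrow> 'a set \<Rightarrow> ('a \<Rightarrow> 'a) set \<Rightarrow> nat" where
  "skew_dist \<sigma> \<delta> B C = Inf {skew_wt \<sigma> \<delta> B (\<lambda>i. f i - g i) | f g. f \<in> C \<and> g \<in> C \<and> f \<noteq> g}"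

definition ham_wt :: "'a set \<Rightarrow> ('a \<Rightarrow> 'b::zero) \<Rightarrow> nat" where
  "ham_wt A c = card {a\<in>A. c a \<noteq> 0}"

definition ham_dist :: "'a set \<Rightarrow> ('a \<Rightarrow> 'b::ab_group_add) set \<Rightarrow> nat" where
  "ham_dist A D = Inf {ham_wt A (\<lambda>i. f i - g i) | f g. f \<in> D \<and> g \<in> D \<and> f \<noteq> g}"

definition proj :: "('a::division_ring \<Rightarrow> 'a) \<Rightarrow> ('a \<Rightarrow> 'a) \<Rightarrow> 'a set \<Rightarrow> 'a set \<Rightarrow> ('a \<Rightarrow> 'a) \<Rightarrow> 'a \<Rightarrow> 'a" where
  "proj \<sigma> \<delta> B A c = E \<sigma> \<delta> A (interp \<sigma> \<delta> B c)"

end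

theory Submission
  imports Defs
begin

lemma homog:
  fixes M :: "'i \<Rightarrow> 'j \<Rightarrow> 'a::division_ring"
  assumes "finite I" "finite J" "card J < card I"
  shows "\<exists>c. (\<exists>i\<in>I. c i \<noteq> 0) \<and> (\<forall>j\<in>J. (\<Sum>i\<in>I. c i * M i j) = 0)"
  using assms(2,1,3)
proof (induction J arbitrary: I M rule: finite_induct)
  case empty
  then obtain i where "i \<in> I" by fastforce
  then show ?case by (intro exI[of _ "\<lambda>_. 1"]) auto
next
  case (insert j J)
  show ?case
  proof (cases "\<forall>i\<in>I. M i j = 0")
    case True
    from insert.IH[of I M] insert.prems insert.hyps obtain c where
      c: "\<exists>i\<in>I. c i \<noteq> 0" "\<forall>j\<in>J. (\<Sum>i\<in>I. c i * M i j) = 0" by auto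
    then show ?thesis using True by (intro exI[of _ c]) auto
  next
    case False
    then obtain i0 where i0: "i0 \<in> I" "M i0 j \<noteq> 0" by blast
    define I' where "I' = I - {i0}"
    have fI': "finite I'" using insert.prems by (simp add: I'_def)
    have cI': "card J < card I'" using insert.prems insert.hyps i0 by (simp add: I'_def)
    define M' where "M' i j' = M i j' - M i j * inverse (M i0 j) * M i0 j'" for i j'
    from insert.IH[OF fI' cI', of M'] obtain c' where
      c': "\<exists>i\<in>I'. c' i \<noteq> 0" "\<forall>j'\<in>J. (\<Sum>i\<in>I'. c' i * M' i j') = 0" by blast
    define s where "s = (\<Sum>k\<in>I'. c' k * M k j)"
    define c where "c i = (if i = i0 then - s * inverse (M i0 j) else c' i)" for i
    have split: "(\<Sum>i\<in>I. c i * M i j') = c i0 * M i0 j' + (\<Sum>i\<in>I'. c' i * M i j')" for j'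
    proof -
      have "(\<Sum>i\<in>I. c i * M i j') = c i0 * M i0 j' + (\<Sum>i\<in>I'. c i * M i j')"
        unfolding I'_def using insert.prems i0 by (simp add: sum.remove)
      also have "(\<Sum>i\<in>I'. c i * M i j') = (\<Sum>i\<in>I'. c' i * M i j')"
        by (rule sum.cong) (auto simp: c_def I'_def)
      finally show ?thesis .
    qed
    have colj: "(\<Sum>i\<in>I. c i * M i j) = 0"
      using i0 by (subst split) (simp add: c_def s_def mult.assoc)
    have colJ: "(\<Sum>i\<in>I. c i * M i j') = 0" if "j' \<in> J" for j'
    proof -
      have "(\<Sum>i\<in>I'. c' i * M' i j') = (\<Sum>i\<in>I'. c' i * M i j') - s * inverse (M i0 j) * M i0 j'"
        by (simp add: M'_def s_def right_diff_distrib sum_subtractf sum_distrib_right mult.assoc)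
      moreover have "c i0 * M i0 j' = - (s * inverse (M i0 j) * M i0 j')" by (simp add: c_def)
      ultimately show ?thesis using c'(2) that by (simp add: split)
    qed
    have "\<exists>i\<in>I. c i \<noteq> 0" using c'(1) by (auto simp: c_def I'_def)
    then show ?thesis using colj colJ by (intro exI[of _ c]) auto
  qed
qed

lemma lcomb_insert: "finite S \<Longrightarrow> v \<notin> S \<Longrightarrow> lcomb c (insert v S) i = c v * v i + lcomb c S i"
  by (simp add: lcomb_def)

lemma lc_zero: "left_code B C \<Longrightarrow> (\<lambda>_. 0) \<in> C"
  unfolding left_code_def by (elim conjE)
lemma lc_sub: "left_code B C \<Longrightarrow> C \<subseteq> vecs B"
  unfolding left_code_def by (elim conjE)
lemma lc_add: assumes "left_code B C" "u \<in> C" "v \<in> C" shows "(\<lambda>i. u i + v i) \<in> C"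
proof -
  have "\<forall>u\<in>C. \<forall>v\<in>C. (\<lambda>i. u i + v i) \<in> C" using assms(1) unfolding left_code_def by (elim conjE)
  then show ?thesis using assms(2,3) by blast
qed
lemma lc_smult: assumes "left_code B C" "u \<in> C" shows "(\<lambda>i. a * u i) \<in> C"
proof -
  have "\<forall>a. \<forall>u\<in>C. (\<lambda>i. a * u i) \<in> C" using assms(1) unfolding left_code_def by (elim conjE)
  then show ?thesis using assms(2) by blast
qed

lemma lcomb_in:
  assumes "left_code B C" "finite S" "S \<subseteq> C"
  shows "lcomb c S \<in> C"
  using assms(2,3)
proof (induction S rule: finite_induct)
  case empty
  have "lcomb c {} = (\<lambda>_. 0)" by (simp add: lcomb_def)
  then show ?case using lc_zero[OF assms(1)] by simp
next
  case (insert v S)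
  then have i: "lcomb c S \<in> C" "v \<in> C" by auto
  have "(\<lambda>i. c v * v i + lcomb c S i) \<in> C"
    by (rule lc_add[OF assms(1) lc_smult[OF assms(1) i(2)] i(1)])
  moreover have "lcomb c (insert v S) = (\<lambda>i. c v * v i + lcomb c S i)"
    using insert.hyps by (simp add: lcomb_insert fun_eq_iff)
  ultimately show ?case by simp
qed

lemma lcomb_delta: assumes "finite S" "u \<in> S" shows "lcomb (\<lambda>w. if w = u then 1 else 0) S = u"
proof
  fix i
  have "lcomb (\<lambda>w. if w = u then 1 else 0) S i = (\<Sum>w\<in>S. if w = u then w i else 0)"
    unfolding lcomb_def by (rule sum.cong) auto
  also have "\<dots> = u i" using assms by (simp add: sum.delta')
  finally show "lcomb (\<lambda>w. if w = u then 1 else 0) S i = u i" .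
qed

lemma indep_nonzero:
  fixes S :: "('b \<Rightarrow> 'c::division_ring) set"
  assumes "finite S" "left_indep S" "v \<in> S" shows "v \<noteq> (\<lambda>_. 0)"
proof
  assume "v = (\<lambda>_. 0)"
  then have l: "lcomb (\<lambda>w. if w = v then 1 else 0) S = (\<lambda>_. 0)" using lcomb_delta[OF assms(1,3)] by simp
  have "(\<lambda>w. if w = v then 1 else (0::'c)) v = 0"
    using assms(2) l assms(3) unfolding left_indep_def by blast
  then show False by simp
qed

lemma indep_bound:
  fixes S :: "('a \<Rightarrow> 'a::division_ring) set"
  assumes "finite B" "finite S" "S \<subseteq> vecs B" "left_indep S"
  shows "card S \<le> card B"
proof (rule ccontr)
  assume "\<not> card S \<le> card B"
  then obtain c where c: "\<exists>v\<in>S. c v \<noteq> 0" "\<forall>b\<in>B. (\<Sum>v\<in>S. c v * v b) = 0"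
    using homog[of S B "\<lambda>v b. v b"] assms by auto
  have "lcomb c S = (\<lambda>_. 0)"
  proof
    fix i show "lcomb c S i = 0"
    proof (cases "i \<in> B")
      case True then show ?thesis using c(2) by (simp add: lcomb_def)
    next
      case False
      then have "\<forall>v\<in>S. v i = 0" using assms(3) by (auto simp: vecs_def)
      then show ?thesis unfolding lcomb_def by (intro sum.neutral) simp
    qed
  qed
  then show False using c(1) assms(4) unfolding left_indep_def by blast
qed

lemma exists_basis:
  fixes C :: "('a \<Rightarrow> 'a::division_ring) set"
  assumes "left_code B C" "finite B"
  shows "\<exists>S. left_basis S C"
proof -
  have CB: "C \<subseteq> vecs B" using lc_sub[OF assms(1)] .
  define Kc where "Kc = {card S | S. finite S \<and> S \<subseteq> C \<and> left_indep S}"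
  have Kb: "Kc \<subseteq> {..card B}"
  proof
    fix k assume "k \<in> Kc"
    then obtain S where S: "k = card S" "finite S" "S \<subseteq> C" "left_indep S" unfolding Kc_def by blast
    then have "card S \<le> card B" using indep_bound[OF assms(2) S(2) _ S(4)] CB by blast
    then show "k \<in> {..card B}" using S(1) by simp
  qed
  then have fK: "finite Kc" by (rule finite_subset) simp
  have "left_indep ({} :: ('a \<Rightarrow> 'a) set)" by (simp add: left_indep_def)
  then have "card ({} :: ('a \<Rightarrow> 'a) set) \<in> Kc" unfolding Kc_def by blast
  then have ne: "Kc \<noteq> {}" by blast
  define m where "m = Max Kc"
  have "m \<in> Kc" using Max_in[OF fK ne] by (simp add: m_def)
  then have "m \<in> {card S | S. finite S \<and> S \<subseteq> C \<and> left_indep S}" by (simp only: Kc_def)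
  then obtain S where S: "finite S" "S \<subseteq> C" "left_indep S" "card S = m" by blast
  have "left_span S = C"
  proof
    show "left_span S \<subseteq> C" using lcomb_in[OF assms(1) S(1,2)] by (auto simp: left_span_def)
  next
    show "C \<subseteq> left_span S"
    proof
      fix u assume u: "u \<in> C"
      show "u \<in> left_span S"
      proof (cases "u \<in> S")
        case True
        then show ?thesis using lcomb_delta[OF S(1) True] unfolding left_span_def by (metis (mono_tags, lifting) mem_Collect_eq)
      next
        case False
        have "\<not> left_indep (insert u S)"
        proof
          assume "left_indep (insert u S)"
          then have "card (insert u S) \<in> Kc" unfolding Kc_def using S u by blast
          then have "card (insert u S) \<le> m" unfolding m_def using fK by (rule Max_ge[rotated])
          then show False using False S(1,4) by simp
        qed
        then obtain c where c: "lcomb c (insert u S) = (\<lambda>_. 0)" "\<exists>v\<in>insert u S. c v \<noteq> 0"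
          unfolding left_indep_def by blast
        have e: "c u * u i + lcomb c S i = 0" for i
          using fun_cong[OF c(1), of i] lcomb_insert[OF S(1) False] by simp
        have cu: "c u \<noteq> 0"
        proof
          assume "c u = 0"
          then have "lcomb c S = (\<lambda>_. 0)" using e by auto
          then have "\<forall>v\<in>S. c v = 0" using S(3) unfolding left_indep_def by blast
          then show False using c(2) \<open>c u = 0\<close> by auto
        qed
        have "u = lcomb (\<lambda>v. - inverse (c u) * c v) S"
        proof
          fix i
          have ee: "c u * u i = - lcomb c S i" using e[of i] by (simp add: eq_neg_iff_add_eq_0)
          have "u i = inverse (c u) * (c u * u i)" using cu by (simp add: mult.assoc[symmetric])
          also have "\<dots> = - inverse (c u) * lcomb c S i" using ee by simp
          finally have "u i = - inverse (c u) * lcomb c S i" .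
          also have "\<dots> = lcomb (\<lambda>v. - inverse (c u) * c v) S i"
            by (simp add: lcomb_def sum_distrib_left mult.assoc)
          finally show "u i = lcomb (\<lambda>v. - inverse (c u) * c v) S i" .
        qed
        then show ?thesis unfolding left_span_def by blast
      qed
    qed
  qed
  then show ?thesis using S by (auto simp: left_basis_def)
qed

locale skew =
  fixes \<sigma> \<delta> :: "'a::division_ring \<Rightarrow> 'a"
  assumes endo: "ring_endo \<sigma>" and der: "sigma_derivation \<sigma> \<delta>"
begin

lemma s_add: "\<sigma> (a + b) = \<sigma> a + \<sigma> b" using endo by (simp add: ring_endo_def)
lemma s_mult: "\<sigma> (a * b) = \<sigma> a * \<sigma> b" using endo by (simp add: ring_endo_def)
lemma s_one[simp]: "\<sigma> 1 = 1" using endo by (simp add: ring_endo_def)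
lemma d_add: "\<delta> (a + b) = \<delta> a + \<delta> b" using der by (simp add: sigma_derivation_def)
lemma d_mult: "\<delta> (a * b) = \<sigma> a * \<delta> b + \<delta> a * b" using der by (simp add: sigma_derivation_def)
lemma s_zero[simp]: "\<sigma> 0 = 0" using s_add[of 0 0] by simp
lemma d_zero[simp]: "\<delta> 0 = 0" using d_add[of 0 0] by simp
lemma s_inj: "\<sigma> a = 0 \<Longrightarrow> a = 0"
proof (rule ccontr)
  assume "\<sigma> a = 0" "a \<noteq> 0"
  have "\<sigma> (a * inverse a) = \<sigma> a * \<sigma> (inverse a)" by (rule s_mult)
  then have "\<sigma> (a * inverse a) = 0" using \<open>\<sigma> a = 0\<close> by simp
  moreover have "a * inverse a = 1" using \<open>a \<noteq> 0\<close> by simp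
  ultimately show False by simp
qed
lemma sp_one[simp]: "(\<sigma> ^^ j) 1 = 1" by (induction j) auto
lemma sp_inj: "(\<sigma> ^^ j) a = 0 \<Longrightarrow> a = 0" by (induction j) (auto dest: s_inj)

lemma coeff_xmul: "coeff (xmul \<sigma> \<delta> p) n = (if n = 0 then 0 else \<sigma> (coeff p (n - 1))) + \<delta> (coeff p n)"
  by (simp add: xmul_def coeff_map_poly coeff_pCons')

lemma coeff_lsmult[simp]: "coeff (lsmult a p) n = a * coeff p n"
  by (simp add: lsmult_def coeff_map_poly)

lemma lsmult_add: "lsmult a (p + q) = lsmult a p + lsmult a q"
  by (rule poly_eqI) (simp add: distrib_left)
lemma lsmult_add_left: "lsmult (a + b) p = lsmult a p + lsmult b p"
  by (rule poly_eqI) (simp add: distrib_right)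
lemma lsmult_lsmult: "lsmult a (lsmult b p) = lsmult (a * b) p"
  by (rule poly_eqI) (simp add: mult.assoc)
lemma lsmult_one[simp]: "lsmult 1 p = p" by (rule poly_eqI) simp
lemma lsmult_zero[simp]: "lsmult 0 p = 0" by (rule poly_eqI) simp
lemma lsmult_zero2[simp]: "lsmult a 0 = 0" by (rule poly_eqI) simp
lemma lsmult_minus: "lsmult a (- p) = - lsmult a p" by (rule poly_eqI) simp
lemma lsmult_diff: "lsmult a (p - q) = lsmult a p - lsmult a q"
  by (rule poly_eqI) (simp add: right_diff_distrib)
lemma lsmult_sum: "lsmult a (sum f S) = (\<Sum>i\<in>S. lsmult a (f i))"
  by (induction S rule: infinite_finite_induct) (auto simp: lsmult_add)
lemma degree_lsmult_le: "degree (lsmult a p) \<le> degree p"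
  by (rule degree_le) (simp add: coeff_eq_0)

lemma xmul_add: "xmul \<sigma> \<delta> (p + q) = xmul \<sigma> \<delta> p + xmul \<sigma> \<delta> q"
  by (rule poly_eqI) (simp add: coeff_xmul s_add d_add algebra_simps)
lemma xmul_zero[simp]: "xmul \<sigma> \<delta> 0 = 0"
  by (rule poly_eqI) (simp add: coeff_xmul)
lemma xmul_lsmult: "xmul \<sigma> \<delta> (lsmult a p) = lsmult (\<sigma> a) (xmul \<sigma> \<delta> p) + lsmult (\<delta> a) p"
  by (rule poly_eqI) (simp add: coeff_xmul s_mult d_mult algebra_simps)
lemma xmulp_add: "(xmul \<sigma> \<delta> ^^ i) (p + q) = (xmul \<sigma> \<delta> ^^ i) p + (xmul \<sigma> \<delta> ^^ i) q"
  by (induction i) (auto simp: xmul_add)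
lemma xmulp_zero[simp]: "(xmul \<sigma> \<delta> ^^ i) 0 = 0"
  by (induction i) auto

lemma degree_xmul: assumes "p \<noteq> 0"
  shows "degree (xmul \<sigma> \<delta> p) = Suc (degree p) \<and> coeff (xmul \<sigma> \<delta> p) (Suc (degree p)) = \<sigma> (lead_coeff p)"
proof -
  have c: "coeff (xmul \<sigma> \<delta> p) (Suc (degree p)) = \<sigma> (lead_coeff p)"
    by (simp add: coeff_xmul coeff_eq_0)
  moreover have "\<sigma> (lead_coeff p) \<noteq> 0" using assms s_inj leading_coeff_0_iff by metis
  ultimately have "Suc (degree p) \<le> degree (xmul \<sigma> \<delta> p)" by (metis le_degree)
  moreover have "degree (xmul \<sigma> \<delta> p) \<le> Suc (degree p)"
    by (rule degree_le) (auto simp: coeff_xmul coeff_eq_0)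
  ultimately show ?thesis using c by simp
qed

lemma degree_xmulp: assumes "p \<noteq> 0"
  shows "degree ((xmul \<sigma> \<delta> ^^ j) p) = degree p + j \<and> coeff ((xmul \<sigma> \<delta> ^^ j) p) (degree p + j) = (\<sigma> ^^ j) (lead_coeff p)"
proof (induction j)
  case 0 then show ?case by simp
next
  case (Suc j)
  have "(xmul \<sigma> \<delta> ^^ j) p \<noteq> 0"
  proof
    assume "(xmul \<sigma> \<delta> ^^ j) p = 0"
    then have "(\<sigma> ^^ j) (lead_coeff p) = 0" using Suc by simp
    then show False using assms sp_inj leading_coeff_0_iff by metis
  qed
  from degree_xmul[OF this] Suc show ?case by simp
qed

lemma skew_mult_less: "degree P < m \<Longrightarrow>
  skew_mult \<sigma> \<delta> P Q = (\<Sum>i<m. lsmult (coeff P i) ((xmul \<sigma> \<delta> ^^ i) Q))"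
  unfolding skew_mult_def
  by (rule sum.mono_neutral_left) (auto simp: coeff_eq_0)

lemma skew_mult_add_left: "skew_mult \<sigma> \<delta> (P + P') Q = skew_mult \<sigma> \<delta> P Q + skew_mult \<sigma> \<delta> P' Q"
proof -
  define m where "m = Suc (degree P + degree P')"
  have "degree (P + P') < m" unfolding m_def using degree_add_le_max[of P P'] by linarith
  then show ?thesis
    by (subst (1 2 3) skew_mult_less[where m = m]) (auto simp: m_def lsmult_add_left sum.distrib)
qed

lemma skew_mult_add_right: "skew_mult \<sigma> \<delta> P (Q + Q') = skew_mult \<sigma> \<delta> P Q + skew_mult \<sigma> \<delta> P Q'"
  unfolding skew_mult_def by (simp add: xmulp_add lsmult_add sum.distrib)

lemma skew_mult_zero_left[simp]: "skew_mult \<sigma> \<delta> 0 Q = 0"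
  by (simp add: skew_mult_def)
lemma skew_mult_zero_right[simp]: "skew_mult \<sigma> \<delta> P 0 = 0"
  by (simp add: skew_mult_def)

lemma skew_mult_lsmult: "skew_mult \<sigma> \<delta> (lsmult a P) Q = lsmult a (skew_mult \<sigma> \<delta> P Q)"
proof -
  have "degree (lsmult a P) < Suc (degree P)" using degree_lsmult_le[of a P] by simp
  then show ?thesis
    by (subst (1 2) skew_mult_less[where m = "Suc (degree P)"]) (simp_all only: lsmult_sum lsmult_lsmult coeff_lsmult lessI)
qed

lemma skew_mult_minus_left: "skew_mult \<sigma> \<delta> (- P) Q = - skew_mult \<sigma> \<delta> P Q"
  using skew_mult_add_left[of P "-P" Q] by (simp add: eq_neg_iff_add_eq_0 add.commute)
lemma skew_mult_diff_left: "skew_mult \<sigma> \<delta> (P - P') Q = skew_mult \<sigma> \<delta> P Q - skew_mult \<sigma> \<delta> P' Q"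
  using skew_mult_add_left[of P "-P'" Q] by (simp add: skew_mult_minus_left)

lemma skew_mult_sum_left: "skew_mult \<sigma> \<delta> (sum f S) Q = (\<Sum>i\<in>S. skew_mult \<sigma> \<delta> (f i) Q)"
  by (induction S rule: infinite_finite_induct) (auto simp: skew_mult_add_left)

lemma skew_mult_monom: "skew_mult \<sigma> \<delta> (monom c j) Q = lsmult c ((xmul \<sigma> \<delta> ^^ j) Q)"
proof -
  have "degree (monom c j) < Suc j" using degree_monom_le[of c j] by simp
  then show ?thesis
    by (subst skew_mult_less[where m = "Suc j"]) (auto simp: if_distrib cong: if_cong)
qed

lemma skew_mult_pCons0: "skew_mult \<sigma> \<delta> (pCons 0 P) Q = skew_mult \<sigma> \<delta> P (xmul \<sigma> \<delta> Q)"
proof -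
  have "degree (pCons 0 P) < Suc (Suc (degree P))" by simp
  then have "skew_mult \<sigma> \<delta> (pCons 0 P) Q = (\<Sum>i<Suc (Suc (degree P)). lsmult (coeff (pCons 0 P) i) ((xmul \<sigma> \<delta> ^^ i) Q))"
    by (rule skew_mult_less)
  also have "\<dots> = (\<Sum>i<Suc (degree P). lsmult (coeff P i) ((xmul \<sigma> \<delta> ^^ i) (xmul \<sigma> \<delta> Q)))"
    by (subst sum.lessThan_Suc_shift) (simp add: funpow_Suc_right del: funpow.simps)
  also have "\<dots> = skew_mult \<sigma> \<delta> P (xmul \<sigma> \<delta> Q)" by (rule skew_mult_less[symmetric]) simp
  finally show ?thesis .
qed

lemma skew_mult_map: assumes "f 0 = 0"
  shows "skew_mult \<sigma> \<delta> (map_poly f P) Q = (\<Sum>i<Suc (degree P). lsmult (f (coeff P i)) ((xmul \<sigma> \<delta> ^^ i) Q))"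
proof -
  have "degree (map_poly f P) < Suc (degree P)" using map_poly_degree_leq[of f P] by simp
  then show ?thesis by (subst skew_mult_less[where m = "Suc (degree P)"]) (auto simp: coeff_map_poly assms)
qed

lemma xmul_sum: "xmul \<sigma> \<delta> (sum f S) = (\<Sum>i\<in>S. xmul \<sigma> \<delta> (f i))"
  by (induction S rule: infinite_finite_induct) (auto simp: xmul_add)

lemma xmul_skew_mult: "xmul \<sigma> \<delta> (skew_mult \<sigma> \<delta> Q R) = skew_mult \<sigma> \<delta> (xmul \<sigma> \<delta> Q) R"
proof -
  let ?m = "Suc (degree Q)"
  have "xmul \<sigma> \<delta> (skew_mult \<sigma> \<delta> Q R) = xmul \<sigma> \<delta> (\<Sum>i<?m. lsmult (coeff Q i) ((xmul \<sigma> \<delta> ^^ i) R))"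
    by (subst skew_mult_less[where m = ?m]) auto
  also have "\<dots> = (\<Sum>i<?m. xmul \<sigma> \<delta> (lsmult (coeff Q i) ((xmul \<sigma> \<delta> ^^ i) R)))"
    by (rule xmul_sum)
  also have "\<dots> = (\<Sum>i<?m. lsmult (\<sigma> (coeff Q i)) ((xmul \<sigma> \<delta> ^^ i) (xmul \<sigma> \<delta> R)))
     + (\<Sum>i<?m. lsmult (\<delta> (coeff Q i)) ((xmul \<sigma> \<delta> ^^ i) R))"
    by (simp add: xmul_lsmult sum.distrib funpow_swap1)
  also have "\<dots> = skew_mult \<sigma> \<delta> (map_poly \<sigma> Q) (xmul \<sigma> \<delta> R) + skew_mult \<sigma> \<delta> (map_poly \<delta> Q) R"
    by (simp add: skew_mult_map)
  also have "\<dots> = skew_mult \<sigma> \<delta> (xmul \<sigma> \<delta> Q) R"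
    by (simp add: xmul_def skew_mult_add_left skew_mult_pCons0)
  finally show ?thesis .
qed

lemma xmulp_skew_mult: "(xmul \<sigma> \<delta> ^^ j) (skew_mult \<sigma> \<delta> Q R) = skew_mult \<sigma> \<delta> ((xmul \<sigma> \<delta> ^^ j) Q) R"
  by (induction j) (auto simp: xmul_skew_mult)

lemma skew_mult_assoc: "skew_mult \<sigma> \<delta> G (skew_mult \<sigma> \<delta> Q R) = skew_mult \<sigma> \<delta> (skew_mult \<sigma> \<delta> G Q) R"
proof -
  have "skew_mult \<sigma> \<delta> G (skew_mult \<sigma> \<delta> Q R) = (\<Sum>i\<le>degree G. lsmult (coeff G i) (skew_mult \<sigma> \<delta> ((xmul \<sigma> \<delta> ^^ i) Q) R))"
    by (simp add: skew_mult_def[of _ _ G] xmulp_skew_mult)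
  also have "\<dots> = (\<Sum>i\<le>degree G. skew_mult \<sigma> \<delta> (lsmult (coeff G i) ((xmul \<sigma> \<delta> ^^ i) Q)) R)"
    by (simp add: skew_mult_lsmult)
  also have "\<dots> = skew_mult \<sigma> \<delta> (skew_mult \<sigma> \<delta> G Q) R"
    by (simp add: skew_mult_def[of _ _ G] skew_mult_sum_left)
  finally show ?thesis .
qed

lemma coeff_skew_mult_high:
  assumes "Q \<noteq> 0" "degree Q + degree P \<le> N"
  shows "coeff (skew_mult \<sigma> \<delta> P Q) N =
    (if N = degree Q + degree P then lead_coeff P * (\<sigma> ^^ degree P) (lead_coeff Q) else 0)"
proof -
  have z: "coeff ((xmul \<sigma> \<delta> ^^ i) Q) N = 0" if "i < degree P" for i
    using degree_xmulp[OF assms(1), of i] that assms(2) by (intro coeff_eq_0) simp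
  have "coeff (skew_mult \<sigma> \<delta> P Q) N = (\<Sum>i\<le>degree P. coeff P i * coeff ((xmul \<sigma> \<delta> ^^ i) Q) N)"
    by (simp add: skew_mult_def coeff_sum)
  also have "\<dots> = (\<Sum>i<degree P. coeff P i * coeff ((xmul \<sigma> \<delta> ^^ i) Q) N)
      + lead_coeff P * coeff ((xmul \<sigma> \<delta> ^^ degree P) Q) N"
    by (simp add: lessThan_Suc_atMost[symmetric])
  also have "\<dots> = lead_coeff P * coeff ((xmul \<sigma> \<delta> ^^ degree P) Q) N"
    using z by simp
  also have "\<dots> = (if N = degree Q + degree P then lead_coeff P * (\<sigma> ^^ degree P) (lead_coeff Q) else 0)"
    using degree_xmulp[OF assms(1), of "degree P"] assms(2) by (auto intro: coeff_eq_0)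
  finally show ?thesis .
qed

lemma degree_skew_mult:
  assumes "P \<noteq> 0" "Q \<noteq> 0"
  shows "degree (skew_mult \<sigma> \<delta> P Q) = degree Q + degree P"
proof (rule antisym)
  show "degree (skew_mult \<sigma> \<delta> P Q) \<le> degree Q + degree P"
    by (rule degree_le) (simp add: coeff_skew_mult_high[OF assms(2)])
  have "lead_coeff P * (\<sigma> ^^ degree P) (lead_coeff Q) \<noteq> 0"
    using assms sp_inj leading_coeff_0_iff by (metis no_zero_divisors)
  then show "degree Q + degree P \<le> degree (skew_mult \<sigma> \<delta> P Q)"
    by (intro le_degree) (simp add: coeff_skew_mult_high[OF assms(2)])
qed

lemma skew_mult_nonzero: "P \<noteq> 0 \<Longrightarrow> Q \<noteq> 0 \<Longrightarrow> skew_mult \<sigma> \<delta> P Q \<noteq> 0"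
  using coeff_skew_mult_high[of Q P "degree Q + degree P"] sp_inj leading_coeff_0_iff
  by (metis coeff_0 le_refl no_zero_divisors)

lemma skew_div:
  assumes M: "lead_coeff M = 1"
  shows "\<exists>Q R. G = skew_mult \<sigma> \<delta> Q M + R \<and> (R = 0 \<or> degree R < degree M)"
proof (induction "degree G" arbitrary: G rule: less_induct)
  case less
  show ?case
  proof (cases "G = 0 \<or> degree G < degree M")
    case True
    then show ?thesis by (intro exI[of _ 0] exI[of _ G]) auto
  next
    case False
    then have G0: "G \<noteq> 0" and ge: "degree M \<le> degree G" by auto
    have M0: "M \<noteq> 0" using M by auto
    define j where "j = degree G - degree M"
    define T where "T = skew_mult \<sigma> \<delta> (monom (lead_coeff G) j) M"
    have T: "T = lsmult (lead_coeff G) ((xmul \<sigma> \<delta> ^^ j) M)"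
      by (simp add: T_def skew_mult_monom)
    have dj: "degree M + j = degree G" using ge by (simp add: j_def)
    have cT: "coeff T N = (if N = degree G then lead_coeff G else 0)" if "N \<ge> degree G" for N
      using degree_xmulp[OF M0, of j] that dj M by (auto simp: T intro: coeff_eq_0)
    define G' where "G' = G - T"
    have cG': "coeff G' N = 0" if "N \<ge> degree G" for N
      using cT[OF that] that by (auto simp: G'_def intro: coeff_eq_0)
    show ?thesis
    proof (cases "G' = 0")
      case True
      then have "G = skew_mult \<sigma> \<delta> (monom (lead_coeff G) j) M + 0" by (simp add: G'_def T_def)
      then show ?thesis by blast
    next
      case False
      then have "degree G' < degree G" using cG' leading_coeff_0_iff by (metis not_le)
      from less[OF this] obtain Q R where QR: "G' = skew_mult \<sigma> \<delta> Q M + R" "R = 0 \<or> degree R < degree M"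
        by blast
      have "G = skew_mult \<sigma> \<delta> (Q + monom (lead_coeff G) j) M + R"
        using QR(1) by (simp add: G'_def T_def skew_mult_add_left algebra_simps)
      then show ?thesis using QR(2) by blast
    qed
  qed
qed

abbreviation X :: "'a \<Rightarrow> 'a poly" where "X a \<equiv> [:- a, 1:]"

lemma X_lead[simp]: "lead_coeff (X a) = 1" and X_deg[simp]: "degree (X a) = 1" by auto
lemma X_nz[simp]: "X a \<noteq> 0" by auto

lemma const_add: "[:x + y:] = [:x:] + [:y:]" by simp
lemma lsmult_const: "lsmult c [:e:] = [:c * e:]" by (rule poly_eqI) (simp add: coeff_pCons')

lemma ev_unique:
  assumes "F - [:b:] = skew_mult \<sigma> \<delta> Q (X a)" "F - [:b':] = skew_mult \<sigma> \<delta> Q' (X a)"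
  shows "b = b'"
proof -
  have e: "[:b' - b:] = skew_mult \<sigma> \<delta> (Q - Q') (X a)"
  proof -
    have "(F - [:b:]) - (F - [:b':]) = [:b' - b:]" by simp
    then have "[:b' - b:] = (F - [:b:]) - (F - [:b':])" by (rule sym)
    then show ?thesis using assms by (simp add: skew_mult_diff_left)
  qed
  show ?thesis
  proof (cases "Q = Q'")
    case True
    then show ?thesis using e by simp
  next
    case False
    then have "degree (skew_mult \<sigma> \<delta> (Q - Q') (X a)) = 1 + degree (Q - Q')"
      using degree_skew_mult[of "Q - Q'" "X a"] by simp
    then have "degree [:b' - b:] \<noteq> 0" using e by simp
    then show ?thesis by simp
  qed
qed

lemma ev_char: assumes "F - [:b:] = skew_mult \<sigma> \<delta> Q (X a)" shows "skew_eval \<sigma> \<delta> F a = b"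
  unfolding skew_eval_def
proof (rule the_equality)
  show "\<exists>Q. F - [:b:] = skew_mult \<sigma> \<delta> Q (X a)" using assms by blast
next
  fix b' assume "\<exists>Q. F - [:b':] = skew_mult \<sigma> \<delta> Q (X a)"
  then obtain Q' where "F - [:b':] = skew_mult \<sigma> \<delta> Q' (X a)" by blast
  from ev_unique[OF this assms] show "b' = b" .
qed

lemma ev_exists: "\<exists>Q. F - [:skew_eval \<sigma> \<delta> F a:] = skew_mult \<sigma> \<delta> Q (X a)"
proof -
  obtain Q R where QR: "F = skew_mult \<sigma> \<delta> Q (X a) + R" "R = 0 \<or> degree R < degree (X a)"
    using skew_div[OF X_lead, of F a] by blast
  from QR(2) have "degree R = 0" by auto
  then obtain r where r: "R = [:r:]" using degree0_coeffs by blast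
  then have "F - [:r:] = skew_mult \<sigma> \<delta> Q (X a)" using QR(1) by simp
  then have "skew_eval \<sigma> \<delta> F a = r" by (rule ev_char)
  then show ?thesis using \<open>F - [:r:] = _\<close> by auto
qed

lemma ev_zero_iff: "skew_eval \<sigma> \<delta> F a = 0 \<longleftrightarrow> (\<exists>Q. F = skew_mult \<sigma> \<delta> Q (X a))"
  using ev_exists[of F a] ev_char[of F 0 _ a] by auto

lemma ev_add: "skew_eval \<sigma> \<delta> (F + G) a = skew_eval \<sigma> \<delta> F a + skew_eval \<sigma> \<delta> G a"
proof -
  obtain Q1 Q2 where "F - [:skew_eval \<sigma> \<delta> F a:] = skew_mult \<sigma> \<delta> Q1 (X a)"
      "G - [:skew_eval \<sigma> \<delta> G a:] = skew_mult \<sigma> \<delta> Q2 (X a)" using ev_exists by blast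
  moreover have "(F + G) - [:skew_eval \<sigma> \<delta> F a + skew_eval \<sigma> \<delta> G a:]
     = (F - [:skew_eval \<sigma> \<delta> F a:]) + (G - [:skew_eval \<sigma> \<delta> G a:])"
    by (subst const_add) (rule add_diff_add)
  ultimately have "(F + G) - [:skew_eval \<sigma> \<delta> F a + skew_eval \<sigma> \<delta> G a:] = skew_mult \<sigma> \<delta> (Q1 + Q2) (X a)"
    by (simp add: skew_mult_add_left)
  then show ?thesis by (rule ev_char)
qed

lemma ev_lsmult: "skew_eval \<sigma> \<delta> (lsmult c F) a = c * skew_eval \<sigma> \<delta> F a"
proof -
  obtain Q where "F - [:skew_eval \<sigma> \<delta> F a:] = skew_mult \<sigma> \<delta> Q (X a)" using ev_exists by blast
  then have "lsmult c F - [:c * skew_eval \<sigma> \<delta> F a:] = skew_mult \<sigma> \<delta> (lsmult c Q) (X a)"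
    by (simp add: skew_mult_lsmult flip: lsmult_const lsmult_diff)
  then show ?thesis by (rule ev_char)
qed

lemma ev_const[simp]: "skew_eval \<sigma> \<delta> [:c:] a = c"
  by (rule ev_char[where Q = 0]) simp

lemma ev_zero[simp]: "skew_eval \<sigma> \<delta> 0 a = 0"
  using ev_const[of 0] by simp

lemma ev_minus: "skew_eval \<sigma> \<delta> (- F) a = - skew_eval \<sigma> \<delta> F a"
  using ev_add[of F "-F" a] by (simp add: eq_neg_iff_add_eq_0 add.commute)

lemma ev_diff: "skew_eval \<sigma> \<delta> (F - G) a = skew_eval \<sigma> \<delta> F a - skew_eval \<sigma> \<delta> G a"
  using ev_add[of F "-G" a] by (simp add: ev_minus)

lemma ev_sum: "skew_eval \<sigma> \<delta> (sum f S) a = (\<Sum>i\<in>S. skew_eval \<sigma> \<delta> (f i) a)"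
  by (induction S rule: infinite_finite_induct) (auto simp: ev_add)

lemma ev_mult_zero: "skew_eval \<sigma> \<delta> F a = 0 \<Longrightarrow> skew_eval \<sigma> \<delta> (skew_mult \<sigma> \<delta> G F) a = 0"
  unfolding ev_zero_iff by (auto simp: skew_mult_assoc)

lemma monom_lsmult: "monom c i = lsmult c (monom 1 i)"
  by (rule poly_eqI) simp

lemma poly_sum_monoms: "degree F < m \<Longrightarrow> F = (\<Sum>i<m. monom (coeff F i) i)"
  by (rule poly_eqI) (auto simp: coeff_sum coeff_eq_0)

lemma ev_poly_sum: "degree F < m \<Longrightarrow>
   skew_eval \<sigma> \<delta> F a = (\<Sum>i<m. coeff F i * skew_eval \<sigma> \<delta> (monom 1 i) a)"
  apply (subst poly_sum_monoms, assumption)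
  apply (subst ev_sum)
  apply (subst monom_lsmult)
  apply (simp add: ev_lsmult)
  done


definition vanish :: "'a poly \<Rightarrow> 'a set \<Rightarrow> bool" where
  "vanish F S \<longleftrightarrow> (\<forall>s\<in>S. skew_eval \<sigma> \<delta> F s = 0)"

definition good :: "'a set \<Rightarrow> bool" where
  "good S \<longleftrightarrow> (\<forall>F. F \<noteq> 0 \<longrightarrow> degree F < card S \<longrightarrow> \<not> vanish F S)"

lemma cl_sub: "S \<subseteq> Pclosure \<sigma> \<delta> S" by (auto simp: Pclosure_def)
lemma cl_mono: "S \<subseteq> T \<Longrightarrow> Pclosure \<sigma> \<delta> S \<subseteq> Pclosure \<sigma> \<delta> T" by (auto simp: Pclosure_def)
lemma cl_idem: "Pclosure \<sigma> \<delta> (Pclosure \<sigma> \<delta> S) = Pclosure \<sigma> \<delta> S"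
  by (rule antisym, auto simp: Pclosure_def)
lemma cl_vanish: "vanish F S \<Longrightarrow> vanish F (Pclosure \<sigma> \<delta> S)"
  by (auto simp: vanish_def Pclosure_def)
lemma cl_zeros: "Pclosure \<sigma> \<delta> (zeros \<sigma> \<delta> F \<inter> Y) \<subseteq> zeros \<sigma> \<delta> F"
  by (auto simp: Pclosure_def zeros_def)

lemma P_indep_subset: "T \<subseteq> S \<Longrightarrow> P_indep \<sigma> \<delta> S \<Longrightarrow> P_indep \<sigma> \<delta> T"
  unfolding P_indep_def by (meson Diff_mono cl_mono subset_eq order_refl)

lemma coeff_sum_monom_lt: "coeff (\<Sum>i<m. monom (c i) i) k = (if k < m then c k else 0)"
  by (simp add: coeff_sum)

lemma LA_poly:
  assumes "finite S" "card S < m"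
  shows "\<exists>F. F \<noteq> 0 \<and> degree F < m \<and> vanish F S"
proof -
  obtain c where c: "\<exists>i\<in>{..<m}. c i \<noteq> 0"
    "\<forall>s\<in>S. (\<Sum>i\<in>{..<m}. c i * skew_eval \<sigma> \<delta> (monom 1 i) s) = 0"
    using homog[of "{..<m}" S "\<lambda>i s. skew_eval \<sigma> \<delta> (monom 1 i) s"] assms by auto
  define F where "F = (\<Sum>i<m. monom (c i) i)"
  have cF: "coeff F k = (if k < m then c k else 0)" for k
    by (simp add: F_def coeff_sum_monom_lt)
  have "F \<noteq> 0" using c(1) cF by (metis coeff_0 lessThan_iff)
  moreover have "degree F < m"
  proof -
    have "degree F \<le> m - 1" by (rule degree_le) (auto simp: cF)
    then show ?thesis using assms by linarith
  qed
  moreover have "vanish F S"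
    unfolding vanish_def
  proof
    fix s assume "s \<in> S"
    have "skew_eval \<sigma> \<delta> F s = (\<Sum>i<m. coeff F i * skew_eval \<sigma> \<delta> (monom 1 i) s)"
      by (rule ev_poly_sum) fact
    also have "\<dots> = (\<Sum>i<m. c i * skew_eval \<sigma> \<delta> (monom 1 i) s)"
      by (rule sum.cong) (auto simp: cF)
    finally show "skew_eval \<sigma> \<delta> F s = 0" using c(2) \<open>s \<in> S\<close> by simp
  qed
  ultimately show ?thesis by blast
qed

lemma good_indep: assumes "finite S" "good S" shows "P_indep \<sigma> \<delta> S"
  unfolding P_indep_def
proof (intro ballI notI)
  fix b assume b: "b \<in> S" "b \<in> Pclosure \<sigma> \<delta> (S - {b})"
  have "card (S - {b}) < card S" using assms(1) b(1) by (meson card_Diff1_less)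
  then obtain F where F: "F \<noteq> 0" "degree F < card S" "vanish F (S - {b})"
    using LA_poly[of "S - {b}" "card S"] assms(1) by auto
  then have "skew_eval \<sigma> \<delta> F b = 0" using b(2) by (auto simp: Pclosure_def vanish_def)
  then have "vanish F S" using F(3) by (auto simp: vanish_def)
  then show False using F assms(2) by (auto simp: good_def)
qed

lemma degree_lsmult_nz: "a \<noteq> 0 \<Longrightarrow> degree (lsmult a p) = degree p"
proof (cases "p = 0")
  case False
  assume "a \<noteq> 0"
  then have "coeff (lsmult a p) (degree p) \<noteq> 0" using False by simp
  then have "degree p \<le> degree (lsmult a p)" by (rule le_degree)
  then show ?thesis using degree_lsmult_le[of a p] by simp
qed simp

lemma K:
  assumes "vanish G D" "G \<noteq> 0" "\<forall>H. H \<noteq> 0 \<longrightarrow> degree H < degree G \<longrightarrow> \<not> vanish H D"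
  shows "zeros \<sigma> \<delta> G \<subseteq> Pclosure \<sigma> \<delta> D"
proof
  fix y assume "y \<in> zeros \<sigma> \<delta> G"
  then have y: "skew_eval \<sigma> \<delta> G y = 0" by (simp add: zeros_def)
  define G' where "G' = lsmult (inverse (lead_coeff G)) G"
  have lc: "lead_coeff G \<noteq> 0" using assms(2) by simp
  have dG': "degree G' = degree G" using lc by (simp add: G'_def degree_lsmult_nz)
  have lG': "lead_coeff G' = 1" using lc dG' by (simp add: G'_def)
  have vG': "vanish G' D" using assms(1) by (simp add: vanish_def G'_def ev_lsmult)
  have yG': "skew_eval \<sigma> \<delta> G' y = 0" using y by (simp add: G'_def ev_lsmult)
  show "y \<in> Pclosure \<sigma> \<delta> D"
    unfolding Pclosure_def
  proof (intro CollectI allI impI)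
    fix F assume F: "\<forall>b\<in>D. skew_eval \<sigma> \<delta> F b = 0"
    obtain Q R where QR: "F = skew_mult \<sigma> \<delta> Q G' + R" "R = 0 \<or> degree R < degree G'"
      using skew_div[OF lG', of F] by blast
    have "vanish R D"
    proof -
      have "R = F - skew_mult \<sigma> \<delta> Q G'" using QR(1) by simp
      then show ?thesis using F vG' by (auto simp: vanish_def ev_diff ev_mult_zero)
    qed
    then have "R = 0" using QR(2) assms(3) dG' by auto
    then show "skew_eval \<sigma> \<delta> F y = 0" using QR(1) yG' by (simp add: ev_mult_zero)
  qed
qed

lemma indep_good: assumes "finite S" "P_indep \<sigma> \<delta> S" shows "good S"
  using assms
proof (induction S rule: finite_induct)
  case empty then show ?case by (simp add: good_def)
next
  case (insert b S)
  have gS: "good S" using insert by (meson P_indep_subset subset_insertI)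
  show ?case unfolding good_def
  proof (intro allI impI notI)
    fix F assume F: "F \<noteq> 0" "degree F < card (insert b S)" "vanish F (insert b S)"
    then have vS: "vanish F S" by (simp add: vanish_def)
    then have "\<not> degree F < card S" using gS F(1) by (auto simp: good_def)
    then have dF: "degree F = card S" using F(2) insert.hyps by simp
    have "zeros \<sigma> \<delta> F \<subseteq> Pclosure \<sigma> \<delta> S"
      by (rule K[OF vS F(1)]) (use gS dF in \<open>auto simp: good_def\<close>)
    moreover have "b \<in> zeros \<sigma> \<delta> F" using F(3) by (simp add: vanish_def zeros_def)
    moreover have "insert b S - {b} = S" using insert.hyps by auto
    ultimately show False using insert.prems by (auto simp: P_indep_def)
  qed
qed

lemma extend:
  assumes "finite D" "P_indep \<sigma> \<delta> D" "x \<notin> Pclosure \<sigma> \<delta> D"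
  shows "P_indep \<sigma> \<delta> (insert x D)"
proof -
  have xD: "x \<notin> D" using assms(3) cl_sub[of D] by blast
  have gD: "good D" using assms indep_good by blast
  have "good (insert x D)" unfolding good_def
  proof (intro allI impI notI)
    fix F assume F: "F \<noteq> 0" "degree F < card (insert x D)" "vanish F (insert x D)"
    then have vD: "vanish F D" by (simp add: vanish_def)
    then have "\<not> degree F < card D" using gD F(1) by (auto simp: good_def)
    then have dF: "degree F = card D" using F(2) xD assms(1) by simp
    have "zeros \<sigma> \<delta> F \<subseteq> Pclosure \<sigma> \<delta> D"
      by (rule K[OF vD F(1)]) (use gD dF in \<open>auto simp: good_def\<close>)
    moreover have "x \<in> zeros \<sigma> \<delta> F" using F(3) by (simp add: vanish_def zeros_def)
    ultimately show False using assms(3) by auto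
  qed
  then show ?thesis using good_indep assms(1) by blast
qed

lemma bound:
  assumes "finite B" "T \<subseteq> Pclosure \<sigma> \<delta> B" "P_indep \<sigma> \<delta> T"
  shows "finite T \<and> card T \<le> card B"
proof (rule ccontr)
  assume a: "\<not> (finite T \<and> card T \<le> card B)"
  obtain T' where T': "T' \<subseteq> T" "finite T'" "card T' = Suc (card B)"
  proof (cases "finite T")
    case True
    then have "Suc (card B) \<le> card T" using a by simp
    from obtain_subset_with_card_n[OF this] show ?thesis using that by blast
  next
    case False
    from infinite_arbitrarily_large[OF this, of "Suc (card B)"] show ?thesis using that by blast
  qed
  obtain F where F: "F \<noteq> 0" "degree F < Suc (card B)" "vanish F B"
    using LA_poly[OF assms(1), of "Suc (card B)"] by auto
  have "vanish F T'" using cl_vanish[OF F(3)] T'(1) assms(2) by (auto simp: vanish_def)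
  moreover have "good T'" using indep_good[OF T'(2)] P_indep_subset[OF T'(1) assms(3)] by blast
  ultimately show False using F T' by (auto simp: good_def)
qed

lemma Rk_eq:
  assumes "P_basis \<sigma> \<delta> A W" "finite A"
  shows "Rk \<sigma> \<delta> W = card A"
proof -
  define A' where "A' = (SOME B. P_basis \<sigma> \<delta> B W)"
  have A': "P_basis \<sigma> \<delta> A' W" unfolding A'_def using assms(1) by (rule someI)
  have s1: "A' \<subseteq> Pclosure \<sigma> \<delta> A" "P_indep \<sigma> \<delta> A'" using A' assms(1) unfolding P_basis_def by auto
  have s2: "A \<subseteq> Pclosure \<sigma> \<delta> A'" "P_indep \<sigma> \<delta> A" using A' assms(1) unfolding P_basis_def by auto
  have 1: "finite A' \<and> card A' \<le> card A" using bound[OF assms(2) s1] .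
  have "card A \<le> card A'" using bound[OF _ s2] 1 by blast
  then show ?thesis using 1 by (simp add: Rk_def A'_def)
qed

lemma max_indep:
  assumes "finite B" "Y \<subseteq> Pclosure \<sigma> \<delta> B" "D0 \<subseteq> Y" "P_indep \<sigma> \<delta> D0"
  shows "\<exists>D. D0 \<subseteq> D \<and> D \<subseteq> Y \<and> P_indep \<sigma> \<delta> D \<and> finite D \<and> Y \<subseteq> Pclosure \<sigma> \<delta> D"
proof -
  define Kc where "Kc = {card D | D. D0 \<subseteq> D \<and> D \<subseteq> Y \<and> P_indep \<sigma> \<delta> D}"
  have Kb: "Kc \<subseteq> {..card B}"
  proof
    fix k assume "k \<in> Kc"
    then obtain D where D: "k = card D" "D \<subseteq> Y" "P_indep \<sigma> \<delta> D" unfolding Kc_def by blast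
    then have "D \<subseteq> Pclosure \<sigma> \<delta> B" using assms(2) by blast
    from bound[OF assms(1) this D(3)] show "k \<in> {..card B}" using D(1) by simp
  qed
  then have fK: "finite Kc" by (rule finite_subset) simp
  have "card D0 \<in> Kc" using assms(3,4) unfolding Kc_def by blast
  then have ne: "Kc \<noteq> {}" by blast
  define m where "m = Max Kc"
  have "m \<in> Kc" using Max_in[OF fK ne] by (simp add: m_def)
  then have "m \<in> {card D | D. D0 \<subseteq> D \<and> D \<subseteq> Y \<and> P_indep \<sigma> \<delta> D}" by (simp only: Kc_def)
  then obtain D where D: "D0 \<subseteq> D" "D \<subseteq> Y" "P_indep \<sigma> \<delta> D" "card D = m"
    by blast
  have "D \<subseteq> Pclosure \<sigma> \<delta> B" using D(2) assms(2) by blast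
  then have fD: "finite D" using bound[OF assms(1) _ D(3)] by blast
  have "Y \<subseteq> Pclosure \<sigma> \<delta> D"
  proof
    fix x assume x: "x \<in> Y"
    show "x \<in> Pclosure \<sigma> \<delta> D"
    proof (rule ccontr)
      assume nx: "x \<notin> Pclosure \<sigma> \<delta> D"
      then have "x \<notin> D" using cl_sub[of D] by blast
      have "P_indep \<sigma> \<delta> (insert x D)" using extend[OF fD D(3) nx] .
      moreover have "D0 \<subseteq> insert x D" "insert x D \<subseteq> Y" using D(1,2) x by auto
      ultimately have "card (insert x D) \<in> Kc" unfolding Kc_def by blast
      then have "card (insert x D) \<le> m" unfolding m_def using fK by (rule Max_ge[rotated])
      moreover have "card (insert x D) = Suc (card D)" using \<open>x \<notin> D\<close> fD by simp
      ultimately show False using D(4) by linarith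
    qed
  qed
  then show ?thesis using D fD by blast
qed


lemma ev_sum_monoms: "skew_eval \<sigma> \<delta> (\<Sum>i<m. monom (c i) i) b = (\<Sum>i<m. c i * skew_eval \<sigma> \<delta> (monom 1 i) b)"
  by (simp add: ev_sum monom_lsmult[of "c _"] ev_lsmult)

lemma degree_sum_monoms: "0 < m \<Longrightarrow> degree (\<Sum>i<m. monom (c i) i) < m"
proof -
  assume "0 < m"
  have "degree (\<Sum>i<m. monom (c i) i) \<le> m - 1" by (rule degree_le) (auto simp: coeff_sum_monom_lt)
  then show ?thesis using \<open>0 < m\<close> by linarith
qed

lemma Rk_cl: "finite B \<Longrightarrow> P_indep \<sigma> \<delta> B \<Longrightarrow> Rk \<sigma> \<delta> (Pclosure \<sigma> \<delta> B) = card B"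
  by (rule Rk_eq) (auto simp: P_basis_def cl_sub)

lemma E_inj:
  assumes "finite B" "P_indep \<sigma> \<delta> B" "degree F < card B" "degree G < card B"
    "E \<sigma> \<delta> B F = E \<sigma> \<delta> B G"
  shows "F = G"
proof (rule ccontr)
  assume "F \<noteq> G"
  then have "F - G \<noteq> 0" by simp
  moreover have "degree (F - G) < card B"
  proof -
    have "degree (F - G) \<le> card B - 1" using assms(3,4) by (intro degree_diff_le) auto
    then show ?thesis using assms(3) by linarith
  qed
  moreover have "vanish (F - G) B"
  proof -
    have "skew_eval \<sigma> \<delta> F b = skew_eval \<sigma> \<delta> G b" if "b \<in> B" for b
      using fun_cong[OF assms(5), of b] that by (simp add: E_def)
    then show ?thesis by (simp add: vanish_def ev_diff)
  qed
  ultimately show False using indep_good[OF assms(1,2)] by (auto simp: good_def)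
qed

lemma E_surj:
  assumes "finite B" "P_indep \<sigma> \<delta> B" "0 < card B" "c \<in> vecs B"
  shows "\<exists>F. degree F < card B \<and> E \<sigma> \<delta> B F = c"
proof -
  define N where "N = card B"
  define M where "M i b = (if i < N then skew_eval \<sigma> \<delta> (monom 1 i) b else c b)" for i b
  obtain a where a: "\<exists>i\<in>{..<Suc N}. a i \<noteq> 0" "\<forall>b\<in>B. (\<Sum>i\<in>{..<Suc N}. a i * M i b) = 0"
    using homog[of "{..<Suc N}" B M] assms(1) by (auto simp: N_def)
  have eq: "(\<Sum>i<N. a i * skew_eval \<sigma> \<delta> (monom 1 i) b) + a N * c b = 0" if "b \<in> B" for b
  proof -
    have "(\<Sum>i<Suc N. a i * M i b) = (\<Sum>i<N. a i * M i b) + a N * M N b" by simp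
    also have "(\<Sum>i<N. a i * M i b) = (\<Sum>i<N. a i * skew_eval \<sigma> \<delta> (monom 1 i) b)"
      by (rule sum.cong) (auto simp: M_def)
    finally show ?thesis using a(2) that by (simp add: M_def)
  qed
  have aN: "a N \<noteq> 0"
  proof
    assume aN0: "a N = 0"
    define F where "F = (\<Sum>i<N. monom (a i) i)"
    obtain i where i: "i < Suc N" "a i \<noteq> 0" using a(1) by auto
    then have "i < N" using aN0 by (cases "i = N") auto
    then have "F \<noteq> 0" using i by (metis F_def coeff_0 coeff_sum_monom_lt)
    moreover have "degree F < card B" using assms(3) by (simp add: F_def N_def degree_sum_monoms)
    moreover have "vanish F B" using eq aN0 by (simp add: vanish_def F_def ev_sum_monoms)
    ultimately show False using indep_good[OF assms(1,2)] by (auto simp: good_def)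
  qed
  define F where "F = (\<Sum>i<N. monom (- inverse (a N) * a i) i)"
  have "degree F < card B" using assms(3) by (simp add: F_def N_def degree_sum_monoms)
  moreover have "E \<sigma> \<delta> B F = c"
  proof
    fix b
    show "E \<sigma> \<delta> B F b = c b"
    proof (cases "b \<in> B")
      case True
      have "skew_eval \<sigma> \<delta> F b = (\<Sum>i<N. - inverse (a N) * a i * skew_eval \<sigma> \<delta> (monom 1 i) b)"
        by (simp add: F_def ev_sum_monoms)
      also have "\<dots> = - inverse (a N) * (\<Sum>i<N. a i * skew_eval \<sigma> \<delta> (monom 1 i) b)"
        by (simp add: sum_distrib_left mult.assoc)
      also have "(\<Sum>i<N. a i * skew_eval \<sigma> \<delta> (monom 1 i) b) = - (a N * c b)"
        using eq[OF True] by (simp add: eq_neg_iff_add_eq_0)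
      finally show ?thesis using True aN by (simp add: E_def mult.assoc[symmetric])
    next
      case False
      then show ?thesis using assms(4) by (simp add: E_def vecs_def)
    qed
  qed
  ultimately show ?thesis by blast
qed

lemma interp_props:
  assumes "finite B" "P_indep \<sigma> \<delta> B" "0 < card B" "c \<in> vecs B"
  shows "degree (interp \<sigma> \<delta> B c) < card B \<and> E \<sigma> \<delta> B (interp \<sigma> \<delta> B c) = c"
proof -
  obtain F where F: "degree F < card B" "E \<sigma> \<delta> B F = c" using E_surj[OF assms] by blast
  have "interp \<sigma> \<delta> B c = F"
    unfolding interp_def Rk_cl[OF assms(1,2)]
    by (rule the_equality) (use F E_inj[OF assms(1,2)] in auto)
  then show ?thesis using F by simp
qed

lemma interp_unique:
  assumes "finite B" "P_indep \<sigma> \<delta> B" "0 < card B" "degree F < card B" "E \<sigma> \<delta> B F = c"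
  shows "interp \<sigma> \<delta> B c = F"
proof -
  have "c \<in> vecs B" using assms(5) by (auto simp: vecs_def E_def)
  from interp_props[OF assms(1-3) this] show ?thesis
    using E_inj[OF assms(1,2)] assms(4,5) by metis
qed


lemma P_indep_empty: "P_indep \<sigma> \<delta> {}" by (simp add: P_indep_def)

lemma basis_props:
  assumes "finite B" "P_indep \<sigma> \<delta> B" "P_basis \<sigma> \<delta> A (Pclosure \<sigma> \<delta> B)"
  shows "finite A \<and> card A = card B"
proof -
  have "A \<subseteq> Pclosure \<sigma> \<delta> B" "P_indep \<sigma> \<delta> A" using assms(3) by (auto simp: P_basis_def)
  then have fA: "finite A" using bound[OF assms(1)] by simp
  have "Rk \<sigma> \<delta> (Pclosure \<sigma> \<delta> B) = card A" by (rule Rk_eq[OF assms(3) fA])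
  then show ?thesis using Rk_cl[OF assms(1,2)] fA by simp
qed

lemma ham_E:
  assumes "finite A"
  shows "ham_wt A (E \<sigma> \<delta> A F) = card A - card (A \<inter> zeros \<sigma> \<delta> F)"
proof -
  have "{a\<in>A. E \<sigma> \<delta> A F a \<noteq> 0} = A - (A \<inter> zeros \<sigma> \<delta> F)" by (auto simp: E_def zeros_def)
  then show ?thesis unfolding ham_wt_def using assms by (simp add: card_Diff_subset)
qed

lemma key:
  assumes fB: "finite B" and iB: "P_indep \<sigma> \<delta> B" and nz: "0 < card B" and h: "h \<in> vecs B"
  shows "(\<forall>A. P_basis \<sigma> \<delta> A (Pclosure \<sigma> \<delta> B) \<longrightarrow> skew_wt \<sigma> \<delta> B h \<le> ham_wt A (E \<sigma> \<delta> A (interp \<sigma> \<delta> B h)))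
       \<and> (\<exists>A. P_basis \<sigma> \<delta> A (Pclosure \<sigma> \<delta> B) \<and> skew_wt \<sigma> \<delta> B h = ham_wt A (E \<sigma> \<delta> A (interp \<sigma> \<delta> B h)))"
proof -
  define F where "F = interp \<sigma> \<delta> B h"
  define Z where "Z = zeros \<sigma> \<delta> F \<inter> Pclosure \<sigma> \<delta> B"
  have ZB: "Z \<subseteq> Pclosure \<sigma> \<delta> B" by (simp add: Z_def)
  obtain D where D: "D \<subseteq> Z" "P_indep \<sigma> \<delta> D" "finite D" "Z \<subseteq> Pclosure \<sigma> \<delta> D"
    using max_indep[OF fB ZB _ P_indep_empty] by blast
  have "Pclosure \<sigma> \<delta> D \<subseteq> Z"
  proof -
    have "Pclosure \<sigma> \<delta> D \<subseteq> Pclosure \<sigma> \<delta> Z" using D(1) by (rule cl_mono)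
    moreover have "Pclosure \<sigma> \<delta> Z \<subseteq> zeros \<sigma> \<delta> F" unfolding Z_def by (rule cl_zeros)
    moreover have "Pclosure \<sigma> \<delta> Z \<subseteq> Pclosure \<sigma> \<delta> B" using cl_mono[OF ZB] cl_idem[of B] by blast
    ultimately show ?thesis by (auto simp: Z_def)
  qed
  then have clD: "Pclosure \<sigma> \<delta> D = Z" using D(4) by blast
  then have "P_basis \<sigma> \<delta> D Z" using D by (simp add: P_basis_def)
  then have RkZ: "Rk \<sigma> \<delta> Z = card D" using D(3) by (rule Rk_eq)
  have sw: "skew_wt \<sigma> \<delta> B h = card B - card D"
    unfolding skew_wt_def Rk_cl[OF fB iB] using RkZ by (simp add: Z_def F_def)
  have le: "card B - card D \<le> ham_wt A (E \<sigma> \<delta> A F)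
       \<and> (D \<subseteq> A \<longrightarrow> card B - card D = ham_wt A (E \<sigma> \<delta> A F))"
    if A: "P_basis \<sigma> \<delta> A (Pclosure \<sigma> \<delta> B)" for A
  proof -
    have fA: "finite A" using basis_props[OF fB iB A] by (rule conjunct1)
    have cA: "card A = card B" using basis_props[OF fB iB A] by (rule conjunct2)
    have AB: "A \<subseteq> Pclosure \<sigma> \<delta> B" and iA: "P_indep \<sigma> \<delta> A" using A unfolding P_basis_def by blast+
    have "A \<inter> zeros \<sigma> \<delta> F \<subseteq> Z" using AB unfolding Z_def by blast
    then have h1: "A \<inter> zeros \<sigma> \<delta> F \<subseteq> Pclosure \<sigma> \<delta> D" using clD by simp
    have h2: "P_indep \<sigma> \<delta> (A \<inter> zeros \<sigma> \<delta> F)" using iA by (rule P_indep_subset[rotated]) blast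
    have c1: "card (A \<inter> zeros \<sigma> \<delta> F) \<le> card D" using bound[OF D(3) h1 h2] by (rule conjunct2)
    have c2: "card D \<le> card (A \<inter> zeros \<sigma> \<delta> F)" if "D \<subseteq> A"
    proof -
      have "D \<subseteq> A \<inter> zeros \<sigma> \<delta> F" using that D(1) unfolding Z_def by blast
      then show ?thesis using fA by (intro card_mono) auto
    qed
    have hw: "ham_wt A (E \<sigma> \<delta> A F) = card B - card (A \<inter> zeros \<sigma> \<delta> F)" using ham_E[OF fA, of F] cA by simp
    show ?thesis
    proof
      show "card B - card D \<le> ham_wt A (E \<sigma> \<delta> A F)" using hw c1 by linarith
      show "D \<subseteq> A \<longrightarrow> card B - card D = ham_wt A (E \<sigma> \<delta> A F)" using hw c1 c2 by auto
    qed
  qed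
  have DB: "D \<subseteq> Pclosure \<sigma> \<delta> B" using D(1) ZB by (rule subset_trans)
  obtain A0 where A0: "D \<subseteq> A0" "A0 \<subseteq> Pclosure \<sigma> \<delta> B" "P_indep \<sigma> \<delta> A0" "finite A0"
      "Pclosure \<sigma> \<delta> B \<subseteq> Pclosure \<sigma> \<delta> A0"
    using max_indep[OF fB order_refl DB D(2)] by blast
  have "Pclosure \<sigma> \<delta> A0 \<subseteq> Pclosure \<sigma> \<delta> B" using cl_mono[OF A0(2)] cl_idem[of B] by simp
  then have bA0: "P_basis \<sigma> \<delta> A0 (Pclosure \<sigma> \<delta> B)" using A0(2,3,5) unfolding P_basis_def by blast
  show ?thesis
  proof
    show "\<forall>A. P_basis \<sigma> \<delta> A (Pclosure \<sigma> \<delta> B) \<longrightarrow> skew_wt \<sigma> \<delta> B h \<le> ham_wt A (E \<sigma> \<delta> A (interp \<sigma> \<delta> B h))"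
      using le sw unfolding F_def by simp
    show "\<exists>A. P_basis \<sigma> \<delta> A (Pclosure \<sigma> \<delta> B) \<and> skew_wt \<sigma> \<delta> B h = ham_wt A (E \<sigma> \<delta> A (interp \<sigma> \<delta> B h))"
      using le[OF bA0] A0(1) sw bA0 unfolding F_def by auto
  qed
qed


lemma interp_diff:
  assumes "finite B" "P_indep \<sigma> \<delta> B" "0 < card B" "f \<in> vecs B" "g \<in> vecs B"
  shows "interp \<sigma> \<delta> B (\<lambda>i. f i - g i) = interp \<sigma> \<delta> B f - interp \<sigma> \<delta> B g"
proof (rule interp_unique[OF assms(1-3)])
  have f: "degree (interp \<sigma> \<delta> B f) < card B" "E \<sigma> \<delta> B (interp \<sigma> \<delta> B f) = f"
    using interp_props[OF assms(1-3,4)] by auto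
  have g: "degree (interp \<sigma> \<delta> B g) < card B" "E \<sigma> \<delta> B (interp \<sigma> \<delta> B g) = g"
    using interp_props[OF assms(1-3,5)] by auto
  have "degree (interp \<sigma> \<delta> B f - interp \<sigma> \<delta> B g) \<le> card B - 1"
    using f(1) g(1) by (intro degree_diff_le) auto
  then show "degree (interp \<sigma> \<delta> B f - interp \<sigma> \<delta> B g) < card B" using assms(3) by linarith
  show "E \<sigma> \<delta> B (interp \<sigma> \<delta> B f - interp \<sigma> \<delta> B g) = (\<lambda>i. f i - g i)"
  proof
    fix i
    show "E \<sigma> \<delta> B (interp \<sigma> \<delta> B f - interp \<sigma> \<delta> B g) i = f i - g i"
    proof (cases "i \<in> B")
      case True
      then show ?thesis using fun_cong[OF f(2), of i] fun_cong[OF g(2), of i] by (simp add: E_def ev_diff)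
    next
      case False
      then show ?thesis using assms(4,5) by (simp add: E_def vecs_def)
    qed
  qed
qed

lemma main_loc:
  assumes fB: "finite B" and PB: "P_basis \<sigma> \<delta> B \<Omega>" and nR: "n = Rk \<sigma> \<delta> \<Omega>"
    and code: "left_code B C" and dimk: "left_dim C = k" and k1: "k \<ge> 1"
  shows "skew_dist \<sigma> \<delta> B C = n - k + 1 \<longleftrightarrow>
    (\<forall>A. P_basis \<sigma> \<delta> A \<Omega> \<longrightarrow> ham_dist A (proj \<sigma> \<delta> B A ` C) = n - k + 1)"
proof -
  have clB: "Pclosure \<sigma> \<delta> B = \<Omega>" and iB: "P_indep \<sigma> \<delta> B" using PB by (auto simp: P_basis_def)
  have nB: "n = card B" using nR Rk_eq[OF PB fB] by simp
  have CB: "C \<subseteq> vecs B" using lc_sub[OF code] .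
  define S where "S = (SOME S. left_basis S C)"
  have bS: "left_basis S C" unfolding S_def using exists_basis[OF code fB] by (rule someI_ex)
  have cS: "card S = k" using dimk by (simp add: left_dim_def S_def)
  have fS: "finite S" and SC: "S \<subseteq> C" and iS: "left_indep S" using bS by (auto simp: left_basis_def)
  have "S \<noteq> {}" using cS k1 by auto
  then obtain v where v: "v \<in> S" by blast
  have v0: "v \<noteq> (\<lambda>_. 0)" by (rule indep_nonzero[OF fS iS v])
  have vC: "v \<in> C" using v SC by blast
  then have "v \<in> vecs B" using CB by blast
  then have "B \<noteq> {}" using v0 by (auto simp: vecs_def)
  then have nz: "0 < card B" using fB by (simp add: card_gt_0_iff)
  define W where "W = {(\<lambda>i. f i - g i) | f g. f \<in> C \<and> g \<in> C \<and> f \<noteq> g}"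
  define wA where "wA A h = ham_wt A (E \<sigma> \<delta> A (interp \<sigma> \<delta> B h))" for A h
  define sw where "sw h = skew_wt \<sigma> \<delta> B h" for h
  define N where "N = n - k + 1"
  have WB: "W \<subseteq> vecs B"
  proof
    fix h assume "h \<in> W"
    then obtain f g where fg: "f \<in> C" "g \<in> C" "h = (\<lambda>i. f i - g i)" unfolding W_def by blast
    then have "f \<in> vecs B" "g \<in> vecs B" using CB by auto
    then show "h \<in> vecs B" using fg(3) by (simp add: vecs_def)
  qed
  have "(\<lambda>i. v i - 0) \<in> W" unfolding W_def using vC lc_zero[OF code] v0
    by (intro CollectI exI[of _ v] exI[of _ "\<lambda>_. 0"]) auto
  then have Wne: "W \<noteq> {}" by blast
  have key': "(\<forall>A. P_basis \<sigma> \<delta> A \<Omega> \<longrightarrow> sw h \<le> wA A h) \<and> (\<exists>A. P_basis \<sigma> \<delta> A \<Omega> \<and> sw h = wA A h)"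
    if "h \<in> W" for h
  proof -
    have "h \<in> vecs B" using that WB by blast
    from key[OF fB iB nz this] show ?thesis unfolding clB sw_def wA_def .
  qed
  have bA: "finite A \<and> card A = n" if "P_basis \<sigma> \<delta> A \<Omega>" for A
  proof -
    have "P_basis \<sigma> \<delta> A (Pclosure \<sigma> \<delta> B)" using that clB by simp
    from basis_props[OF fB iB this] show ?thesis using nB by simp
  qed
  have skew_eq: "skew_dist \<sigma> \<delta> B C = Inf (sw ` W)"
  proof -
    have "{skew_wt \<sigma> \<delta> B (\<lambda>i. f i - g i) | f g. f \<in> C \<and> g \<in> C \<and> f \<noteq> g} = sw ` W"
    proof (intro equalityI subsetI)
      fix x assume "x \<in> {skew_wt \<sigma> \<delta> B (\<lambda>i. f i - g i) | f g. f \<in> C \<and> g \<in> C \<and> f \<noteq> g}"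
      then obtain f g where fg: "f \<in> C" "g \<in> C" "f \<noteq> g" "x = skew_wt \<sigma> \<delta> B (\<lambda>i. f i - g i)" by blast
      then have "(\<lambda>i. f i - g i) \<in> W" unfolding W_def by blast
      then show "x \<in> sw ` W" using fg(4) unfolding sw_def by blast
    next
      fix x assume "x \<in> sw ` W"
      then obtain h where h: "h \<in> W" "x = sw h" by blast
      then obtain f g where fg: "f \<in> C" "g \<in> C" "f \<noteq> g" "h = (\<lambda>i. f i - g i)" unfolding W_def by blast
      then show "x \<in> {skew_wt \<sigma> \<delta> B (\<lambda>i. f i - g i) | f g. f \<in> C \<and> g \<in> C \<and> f \<noteq> g}"
        using h(2) unfolding sw_def by blast
    qed
    then show ?thesis by (simp add: skew_dist_def)
  qed
  have proj_diff: "(\<lambda>i. proj \<sigma> \<delta> B A f i - proj \<sigma> \<delta> B A g i) = E \<sigma> \<delta> A (interp \<sigma> \<delta> B (\<lambda>i. f i - g i))"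
    if "f \<in> vecs B" "g \<in> vecs B" for A f g
  proof
    fix i
    have idf: "interp \<sigma> \<delta> B (\<lambda>i. f i - g i) = interp \<sigma> \<delta> B f - interp \<sigma> \<delta> B g"
      by (rule interp_diff[OF fB iB nz that])
    show "proj \<sigma> \<delta> B A f i - proj \<sigma> \<delta> B A g i = E \<sigma> \<delta> A (interp \<sigma> \<delta> B (\<lambda>i. f i - g i)) i"
      unfolding proj_def E_def idf by (simp add: ev_diff)
  qed
  have ham_eq: "ham_dist A (proj \<sigma> \<delta> B A ` C) = Inf (wA A ` W)" if A: "P_basis \<sigma> \<delta> A \<Omega>" for A
  proof -
    have fA: "finite A" and cA: "card A = card B" using bA[OF A] nB by auto
    have iA: "P_indep \<sigma> \<delta> A" using A by (simp add: P_basis_def)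
    have inj: "f = g" if "f \<in> C" "g \<in> C" "proj \<sigma> \<delta> B A f = proj \<sigma> \<delta> B A g" for f g
    proof -
      have fv: "f \<in> vecs B" "g \<in> vecs B" using that CB by auto
      have pf: "degree (interp \<sigma> \<delta> B f) < card B" "E \<sigma> \<delta> B (interp \<sigma> \<delta> B f) = f"
        using interp_props[OF fB iB nz fv(1)] by auto
      have pg: "degree (interp \<sigma> \<delta> B g) < card B" "E \<sigma> \<delta> B (interp \<sigma> \<delta> B g) = g"
        using interp_props[OF fB iB nz fv(2)] by auto
      have ee: "E \<sigma> \<delta> A (interp \<sigma> \<delta> B f) = E \<sigma> \<delta> A (interp \<sigma> \<delta> B g)"
        using that(3) by (simp add: proj_def)
      have d1: "degree (interp \<sigma> \<delta> B f) < card A" using pf(1) cA by simp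
      have d2: "degree (interp \<sigma> \<delta> B g) < card A" using pg(1) cA by simp
      have ii: "interp \<sigma> \<delta> B f = interp \<sigma> \<delta> B g" by (rule E_inj[OF fA iA d1 d2 ee])
      have "f = E \<sigma> \<delta> B (interp \<sigma> \<delta> B f)" using pf(2) by (rule sym)
      also have "\<dots> = E \<sigma> \<delta> B (interp \<sigma> \<delta> B g)" by (simp only: ii)
      also have "\<dots> = g" by (rule pg(2))
      finally show ?thesis .
    qed
    have "{ham_wt A (\<lambda>i. f' i - g' i) | f' g'. f' \<in> proj \<sigma> \<delta> B A ` C \<and> g' \<in> proj \<sigma> \<delta> B A ` C \<and> f' \<noteq> g'}
        = wA A ` W"
    proof (intro equalityI subsetI)
      fix x assume "x \<in> {ham_wt A (\<lambda>i. f' i - g' i) | f' g'. f' \<in> proj \<sigma> \<delta> B A ` C \<and> g' \<in> proj \<sigma> \<delta> B A ` C \<and> f' \<noteq> g'}"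
      then obtain f g where fg: "f \<in> C" "g \<in> C" "proj \<sigma> \<delta> B A f \<noteq> proj \<sigma> \<delta> B A g"
        "x = ham_wt A (\<lambda>i. proj \<sigma> \<delta> B A f i - proj \<sigma> \<delta> B A g i)" by blast
      then have "f \<noteq> g" by blast
      then have "(\<lambda>i. f i - g i) \<in> W" using fg unfolding W_def by blast
      moreover have "x = wA A (\<lambda>i. f i - g i)"
      proof -
        have "f \<in> vecs B" "g \<in> vecs B" using fg(1,2) CB by auto
        from proj_diff[OF this, of A] show ?thesis using fg(4) by (simp add: wA_def)
      qed
      ultimately show "x \<in> wA A ` W" by blast
    next
      fix x assume "x \<in> wA A ` W"
      then obtain f g where fg: "f \<in> C" "g \<in> C" "f \<noteq> g" "x = wA A (\<lambda>i. f i - g i)"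
        unfolding W_def by blast
      then have "proj \<sigma> \<delta> B A f \<noteq> proj \<sigma> \<delta> B A g" using inj by blast
      moreover have "x = ham_wt A (\<lambda>i. proj \<sigma> \<delta> B A f i - proj \<sigma> \<delta> B A g i)"
      proof -
        have "f \<in> vecs B" "g \<in> vecs B" using fg(1,2) CB by auto
        from proj_diff[OF this, of A] show ?thesis using fg(4) by (simp add: wA_def)
      qed
      ultimately show "x \<in> {ham_wt A (\<lambda>i. f' i - g' i) | f' g'. f' \<in> proj \<sigma> \<delta> B A ` C \<and> g' \<in> proj \<sigma> \<delta> B A ` C \<and> f' \<noteq> g'}"
        using fg by blast
    qed
    then show ?thesis by (simp add: ham_dist_def)
  qed
  have singleton: "\<exists>h\<in>W. wA A h \<le> N" if A: "P_basis \<sigma> \<delta> A \<Omega>" for A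
  proof -
    have fA: "finite A" and cA: "card A = n" using bA[OF A] by auto
    define m where "m = min (k - 1) n"
    have "m \<le> card A" using cA by (simp add: m_def)
    then obtain A' where A': "A' \<subseteq> A" "card A' = m" "finite A'" by (rule obtain_subset_with_card_n)
    have "card A' < card S" using A'(2) cS k1 by (simp add: m_def)
    then obtain c where c: "\<exists>u\<in>S. c u \<noteq> 0" "\<forall>a\<in>A'. (\<Sum>u\<in>S. c u * proj \<sigma> \<delta> B A u a) = 0"
      using homog[of S A' "\<lambda>u a. proj \<sigma> \<delta> B A u a"] fS A'(3) by auto
    define w where "w = lcomb c S"
    have wC: "w \<in> C" unfolding w_def by (rule lcomb_in[OF code fS SC])
    have w0: "w \<noteq> (\<lambda>_. 0)" using c(1) iS unfolding w_def left_indep_def by blast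
    have SB: "\<forall>u\<in>S. u \<in> vecs B" using SC CB by blast
    have ip: "degree (interp \<sigma> \<delta> B u) < card B \<and> E \<sigma> \<delta> B (interp \<sigma> \<delta> B u) = u" if "u \<in> S" for u
      using interp_props[OF fB iB nz] SB that by blast
    have iw: "interp \<sigma> \<delta> B w = (\<Sum>u\<in>S. lsmult (c u) (interp \<sigma> \<delta> B u))"
    proof (rule interp_unique[OF fB iB nz])
      have "degree (\<Sum>u\<in>S. lsmult (c u) (interp \<sigma> \<delta> B u)) \<le> card B - 1"
      proof (rule degree_sum_le[OF fS])
        fix u assume "u \<in> S"
        then show "degree (lsmult (c u) (interp \<sigma> \<delta> B u)) \<le> card B - 1"
          using ip[of u] degree_lsmult_le[of "c u" "interp \<sigma> \<delta> B u"] by linarith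
      qed
      then show "degree (\<Sum>u\<in>S. lsmult (c u) (interp \<sigma> \<delta> B u)) < card B" using nz by linarith
      show "E \<sigma> \<delta> B (\<Sum>u\<in>S. lsmult (c u) (interp \<sigma> \<delta> B u)) = w"
      proof
        fix i show "E \<sigma> \<delta> B (\<Sum>u\<in>S. lsmult (c u) (interp \<sigma> \<delta> B u)) i = w i"
        proof (cases "i \<in> B")
          case True
          have "E \<sigma> \<delta> B (\<Sum>u\<in>S. lsmult (c u) (interp \<sigma> \<delta> B u)) i = (\<Sum>u\<in>S. c u * skew_eval \<sigma> \<delta> (interp \<sigma> \<delta> B u) i)"
            using True by (simp add: E_def ev_sum ev_lsmult)
          also have "\<dots> = (\<Sum>u\<in>S. c u * u i)"
          proof (rule sum.cong[OF refl])
            fix u assume "u \<in> S"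
            then have "E \<sigma> \<delta> B (interp \<sigma> \<delta> B u) i = u i" using ip[of u] by simp
            then show "c u * skew_eval \<sigma> \<delta> (interp \<sigma> \<delta> B u) i = c u * u i"
              using True by (simp add: E_def)
          qed
          finally show ?thesis by (simp add: w_def lcomb_def)
        next
          case False
          then have "w i = 0" using wC CB by (auto simp: vecs_def)
          then show ?thesis using False by (simp add: E_def)
        qed
      qed
    qed
    have zA': "E \<sigma> \<delta> A (interp \<sigma> \<delta> B w) a = 0" if "a \<in> A'" for a
    proof -
      have aA: "a \<in> A" using that A'(1) by blast
      have "E \<sigma> \<delta> A (interp \<sigma> \<delta> B w) a = (\<Sum>u\<in>S. c u * skew_eval \<sigma> \<delta> (interp \<sigma> \<delta> B u) a)"
        using aA by (simp add: iw E_def ev_sum ev_lsmult)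
      also have "\<dots> = (\<Sum>u\<in>S. c u * proj \<sigma> \<delta> B A u a)"
        using aA by (simp add: proj_def E_def)
      finally show ?thesis using c(2) that by simp
    qed
    have hW: "(\<lambda>i. w i - (\<lambda>_. 0) i) \<in> W" unfolding W_def using wC lc_zero[OF code] w0
      by (intro CollectI exI[of _ w] exI[of _ "\<lambda>_. 0"]) auto
    have "wA A (\<lambda>i. w i - (\<lambda>_. 0) i) = card {a\<in>A. E \<sigma> \<delta> A (interp \<sigma> \<delta> B w) a \<noteq> 0}"
      by (simp add: wA_def ham_wt_def)
    also have "\<dots> \<le> card (A - A')"
      using zA' fA by (intro card_mono) auto
    also have "\<dots> = n - m" using A' fA cA by (simp add: card_Diff_subset)
    also have "\<dots> \<le> N" by (simp add: N_def m_def)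
    finally show ?thesis using hW by blast
  qed
  show ?thesis
  proof
    assume sd: "skew_dist \<sigma> \<delta> B C = n - k + 1"
    then have sdN: "Inf (sw ` W) = N" using skew_eq by (simp add: N_def)
    show "\<forall>A. P_basis \<sigma> \<delta> A \<Omega> \<longrightarrow> ham_dist A (proj \<sigma> \<delta> B A ` C) = n - k + 1"
    proof (intro allI impI)
      fix A assume A: "P_basis \<sigma> \<delta> A \<Omega>"
      have "N \<le> Inf (wA A ` W)"
      proof (rule cInf_greatest)
        show "wA A ` W \<noteq> {}" using Wne by blast
        fix x assume "x \<in> wA A ` W"
        then obtain h where h: "h \<in> W" "x = wA A h" by blast
        have "Inf (sw ` W) \<le> sw h" using h(1) by (intro cInf_lower) auto
        also have "sw h \<le> wA A h" using key'[OF h(1)] A by blast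
        finally show "N \<le> x" using sdN h(2) by simp
      qed
      moreover have "Inf (wA A ` W) \<le> N"
      proof -
        obtain h where "h \<in> W" "wA A h \<le> N" using singleton[OF A] by blast
        then show ?thesis by (meson cInf_lower2 imageI bdd_below_bot)
      qed
      ultimately show "ham_dist A (proj \<sigma> \<delta> B A ` C) = n - k + 1" using ham_eq[OF A] by (simp add: N_def)
    qed
  next
    assume hd: "\<forall>A. P_basis \<sigma> \<delta> A \<Omega> \<longrightarrow> ham_dist A (proj \<sigma> \<delta> B A ` C) = n - k + 1"
    then have hdN: "Inf (wA A ` W) = N" if "P_basis \<sigma> \<delta> A \<Omega>" for A
      using ham_eq[OF that] that by (simp add: N_def)
    have "Inf (sw ` W) \<le> N"
    proof -
      have "Inf (wA B ` W) \<in> wA B ` W" using Wne by (intro Inf_nat_def1) blast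
      then obtain h0 where h0: "h0 \<in> W" "wA B h0 = N" using hdN[OF PB] by auto
      have "sw h0 \<le> wA B h0" using key'[OF h0(1)] PB by blast
      then show ?thesis using h0 by (meson cInf_lower2 imageI bdd_below_bot)
    qed
    moreover have "N \<le> Inf (sw ` W)"
    proof (rule cInf_greatest)
      show "sw ` W \<noteq> {}" using Wne by blast
      fix x assume "x \<in> sw ` W"
      then obtain h where h: "h \<in> W" "x = sw h" by blast
      then obtain A where A: "P_basis \<sigma> \<delta> A \<Omega>" "sw h = wA A h" using key' by blast
      have "Inf (wA A ` W) \<le> wA A h" using h(1) by (intro cInf_lower) auto
      then show "N \<le> x" using hdN[OF A(1)] A(2) h(2) by simp
    qed
    ultimately show "skew_dist \<sigma> \<delta> B C = n - k + 1" using skew_eq by (simp add: N_def)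
  qed
qed

end

theorem mainTheorem5:
  fixes \<sigma> \<delta> :: "'a::division_ring \<Rightarrow> 'a"
    and \<Omega> B :: "'a set" and C :: "('a \<Rightarrow> 'a) set" and n k :: nat
  assumes "ring_endo \<sigma>"
    and "sigma_derivation \<sigma> \<delta>"
    and "P_closed \<sigma> \<delta> \<Omega>"
    and "finite B" and "P_basis \<sigma> \<delta> B \<Omega>"
    and "n = Rk \<sigma> \<delta> \<Omega>"
    and "left_code B C" and "left_dim C = k" and "k \<ge> 1"
  shows "skew_dist \<sigma> \<delta> B C = n - k + 1 \<longleftrightarrow>
    (\<forall>A. P_basis \<sigma> \<delta> A \<Omega> \<longrightarrow> ham_dist A (proj \<sigma> \<delta> B A ` C) = n - k + 1)"
proof -
  interpret skew \<sigma> \<delta> using assms(1,2) by unfold_locales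
  show ?thesis by (rule main_loc[OF assms(4,5,6,7,8,9)])
qed

end
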